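(* In the database model described in the context, assume $0<\pi_{\mathcal D}<1$ and let $\mathbf r=(r_1,\dots,r_N)$ satisfy $P(\mathbf{LR}_{\mathcal D}=\mathbf r\mid R\notin\mathcal D)>0$. Then for every subset $\mathcal D'\subseteq\{1,\dots,N\}$, \[ P(R\in\mathcal D'\mid \mathbf{LR}_{\mathcal D}=\mathbf r)=\frac{\sum_{i\in\mathcal D'}r_i\pi_i}{\pi_0+\sum_{k=1}^N r_k\pi_k}, \] and \[ \frac{P(\mathbf{LR}_{\mathcal D}=\mathbf r\mid R\in\mathcal D)}{P(\mathbf{LR}_{\mathcal D}=\mathbf r\mid R\notin\mathcal D)}=\frac{\sum_{i=1}^N r_i\pi_i}{\pi_{\mathcal D}}. \] In particular, if $\pi_i=\pi_{\mathcal D}/N$ for all $1\le i\le N$, this likelihood ratio equals $\frac1N\sum_{i=1}^N r_i$.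
   Context: Let $E$ be a countable set and let $S$, $G$ be $E$-valued random variables such that for every $e\in E$, $P(S=e)>0$ implies $P(G=e)>0$. For $e\in E$ define the likelihood ratio $LR(e)=P(S=e)/P(G=e)$ if $P(G=e)>0$ and $LR(e)=0$ otherwise. Database model: fix $N\ge1$. Let $R$ be a random variable with values in $\{0,1,\dots,N\}$; we write $R\in\mathcal D$ for $R\in\{1,\dots,N\}$ and $R\notin\mathcal D$ for $R=0$. Put $\pi_i=P(R=i)$ for $1\le i\le N$, $\pi_{\mathcal D}=\sum_{i=1}^N\pi_i$ and $\pi_0=1-\pi_{\mathcal D}=P(R=0)$. There are $E$-valued random variables $P_1,\dots,P_N$ such that conditionally on $R=i$ with $1\le i\le N$, they are independent, $P_i$ has the distribution of $S$ and $P_j$ ($j\ne i$) has the distribution of $G$; and conditionally on $R=0$ they are independent, each with the distribution of $G$. Set $\mathbf{LR}_{\mathcal D}=(LR(P_1),\dots,LR(P_N))$. *)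

theory Defs
  imports "HOL-Probability.Probability"
begin

definition cprob :: "'w measure \<Rightarrow> 'w set \<Rightarrow> 'w set \<Rightarrow> real" where
  "cprob M A B = measure M (A \<inter> B) / measure M B"

definition LR :: "'w measure \<Rightarrow> ('w \<Rightarrow> 'e) \<Rightarrow> ('w \<Rightarrow> 'e) \<Rightarrow> 'e \<Rightarrow> real" where
  "LR M S G e =
     (if measure M {w \<in> space M. G w = e} > 0
      then measure M {w \<in> space M. S w = e} / measure M {w \<in> space M. G w = e}
      else 0)"

end

theory Submission imports Defs begin

lemma scale_union:
  assumes "prob_space M" "countable I" "\<And>x. x\<in>I \<Longrightarrow> A x \<in> sets M" "\<And>x. x\<in>I \<Longrightarrow> Y x \<in> sets M"
    "disjoint_family_on A I" "disjoint_family_on Y I" "c \<ge> 0"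
    "\<And>x. x\<in>I \<Longrightarrow> measure M (A x) = c * measure M (Y x)"
  shows "measure M (\<Union>(A`I)) = c * measure M (\<Union>(Y`I))"
proof -
  interpret prob_space M by fact
  have "emeasure M (\<Union>(A`I)) = (\<integral>\<^sup>+x. emeasure M (A x) \<partial>count_space I)"
    by (rule emeasure_UN_countable) (use assms in auto)
  also have "\<dots> = (\<integral>\<^sup>+x. ennreal c * emeasure M (Y x) \<partial>count_space I)"
    by (rule nn_integral_cong) (simp add: emeasure_eq_measure assms ennreal_mult)
  also have "\<dots> = ennreal c * (\<integral>\<^sup>+x. emeasure M (Y x) \<partial>count_space I)"
    by (rule nn_integral_cmult) simp
  also have "(\<integral>\<^sup>+x. emeasure M (Y x) \<partial>count_space I) = emeasure M (\<Union>(Y`I))"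
    by (rule emeasure_UN_countable[symmetric]) (use assms in auto)
  finally have "ennreal (measure M (\<Union>(A`I))) = ennreal (c * measure M (\<Union>(Y`I)))"
    by (simp add: emeasure_eq_measure ennreal_mult assms)
  then show ?thesis using assms(7) by (simp add: ennreal_inj)
qed

lemma joint_sets:
  fixes M :: "'w measure" and S G :: "'w \<Rightarrow> 'e::countable" and R :: "'w \<Rightarrow> nat"
    and Ps :: "nat \<Rightarrow> 'w \<Rightarrow> 'e" and B :: "nat \<Rightarrow> 'e set"
  assumes P: "prob_space M"
    and Sm: "S \<in> measurable M (count_space UNIV)"
    and Gm: "G \<in> measurable M (count_space UNIV)"
    and Rm: "R \<in> measurable M (count_space UNIV)"
    and Pm: "\<And>j. j \<in> {1..N} \<Longrightarrow> Ps j \<in> measurable M (count_space UNIV)"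
    and joint: "\<And>i (e :: nat \<Rightarrow> 'e). i \<le> N \<Longrightarrow>
        measure M {w \<in> space M. R w = i \<and> (\<forall>j\<in>{1..N}. Ps j w = e j)}
        = measure M {w \<in> space M. R w = i} *
          (\<Prod>j\<in>{1..N}. (if j = i then measure M {w \<in> space M. S w = e j}
                                    else measure M {w \<in> space M. G w = e j}))"
    and iN: "i \<le> N"
  shows "finite J \<Longrightarrow> J \<subseteq> {1..N} \<Longrightarrow>
    measure M {w\<in>space M. R w = i \<and> (\<forall>j\<in>{1..N}. if j\<in>J then Ps j w \<in> B j else Ps j w = e j)}
    = measure M {w\<in>space M. R w = i} *
      (\<Prod>j\<in>{1..N}. if j\<in>J then (if j=i then measure M {w\<in>space M. S w \<in> B j} else measure M {w\<in>space M. G w \<in> B j})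
                     else (if j = i then measure M {w\<in>space M. S w = e j} else measure M {w\<in>space M. G w = e j}))"
proof (induction J arbitrary: e rule: finite_induct)
  case empty
  then show ?case using joint[OF iN, of e] by simp
next
  case (insert j J)
  interpret prob_space M by (rule P)
  have jN: "j \<in> {1..N}" using insert by auto
  define H where "H = (if j = i then S else G)"
  have Hm: "H \<in> measurable M (count_space UNIV)" using Sm Gm by (simp add: H_def)
  define F where "F = (\<lambda>K (e::nat \<Rightarrow> 'e) k. if k\<in>K then (if k=i then measure M {w\<in>space M. S w \<in> B k} else measure M {w\<in>space M. G w \<in> B k})
                     else (if k = i then measure M {w\<in>space M. S w = e k} else measure M {w\<in>space M. G w = e k}))"
  define A where "A = (\<lambda>x. {w\<in>space M. R w = i \<and> (\<forall>k\<in>{1..N}. if k\<in>J then Ps k w \<in> B k else Ps k w = (e(j:=x)) k)})"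
  define Y where "Y = (\<lambda>x. {w\<in>space M. H w = x})"
  define c where "c = measure M {w\<in>space M. R w = i} * (\<Prod>k\<in>{1..N}-{j}. F (insert j J) e k)"
  have setsK: "{w\<in>space M. if k\<in>K then Ps k w \<in> X k else Ps k w = f k} \<in> sets M" if "k \<in> {1..N}" for k K X f
  proof -
    have "{w\<in>space M. if k\<in>K then Ps k w \<in> X k else Ps k w = f k} = Ps k -` (if k \<in> K then X k else {f k}) \<inter> space M"
      by auto
    then show ?thesis using measurable_sets[OF Pm[OF that], of "if k \<in> K then X k else {f k}"] by simp
  qed
  have Rs: "{w\<in>space M. R w = i} \<in> sets M"
    using measurable_sets[OF Rm, of "{i}"] by (simp add: vimage_def Int_def conj_commute)
  have Asets: "A x \<in> sets M" for x
  proof -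
    have "A x = {w\<in>space M. R w = i} \<inter> {w\<in>space M. \<forall>k\<in>{1..N}. if k\<in>J then Ps k w \<in> B k else Ps k w = (e(j:=x)) k}"
      by (auto simp: A_def)
    moreover have "{w\<in>space M. \<forall>k\<in>{1..N}. if k\<in>J then Ps k w \<in> B k else Ps k w = (e(j:=x)) k} \<in> sets M"
      by (rule sets.sets_Collect_finite_All) (use setsK in auto)
    ultimately show ?thesis using Rs by auto
  qed
  have Ysets: "Y x \<in> sets M" for x
    using measurable_sets[OF Hm, of "{x}"] by (simp add: Y_def vimage_def Int_def conj_commute)
  have disjA: "disjoint_family_on A (B j)"
    using jN insert(2) by (auto simp: disjoint_family_on_def A_def)
  have disjY: "disjoint_family_on Y (B j)"
    by (auto simp: disjoint_family_on_def Y_def)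
  have c0: "c \<ge> 0" unfolding c_def F_def by (intro mult_nonneg_nonneg prod_nonneg) auto
  have mA: "measure M (A x) = c * measure M (Y x)" for x
  proof -
    have "measure M (A x) = measure M {w\<in>space M. R w = i} * prod (F J (e(j:=x))) {1..N}"
      unfolding A_def F_def by (rule insert.IH) (use insert in auto)
    also have "prod (F J (e(j:=x))) {1..N} = F J (e(j:=x)) j * prod (F J (e(j:=x))) ({1..N}-{j})"
      by (rule prod.remove) (use jN in auto)
    also have "F J (e(j:=x)) j = measure M (Y x)"
      using insert(2) by (simp add: F_def Y_def H_def)
    also have "prod (F J (e(j:=x))) ({1..N}-{j}) = (\<Prod>k\<in>{1..N}-{j}. F (insert j J) e k)"
      by (rule prod.cong) (auto simp: F_def)
    finally show ?thesis by (simp add: c_def)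
  qed
  have "measure M (\<Union>(A`B j)) = c * measure M (\<Union>(Y`B j))"
    by (rule scale_union[OF P _ Asets Ysets disjA disjY c0 mA]) simp
  moreover have "\<Union>(A`B j) = {w\<in>space M. R w = i \<and> (\<forall>k\<in>{1..N}. if k\<in>insert j J then Ps k w \<in> B k else Ps k w = e k)}"
    using jN insert(2) by (auto simp: A_def; metis)
  moreover have "\<Union>(Y`B j) = {w\<in>space M. H w \<in> B j}" by (auto simp: Y_def)
  moreover have "prod (F (insert j J) e) {1..N} = F (insert j J) e j * (\<Prod>k\<in>{1..N}-{j}. F (insert j J) e k)"
    by (rule prod.remove) (use jN in auto)
  moreover have "F (insert j J) e j = measure M {w\<in>space M. H w \<in> B j}"
    by (simp add: F_def H_def)
  ultimately have "measure M {w\<in>space M. R w = i \<and> (\<forall>k\<in>{1..N}. if k\<in>insert j J then Ps k w \<in> B k else Ps k w = e k)}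
     = measure M {w\<in>space M. R w = i} * prod (F (insert j J) e) {1..N}" by (simp add: c_def mult_ac)
  then show ?case by (simp add: F_def)
qed

theorem mainTheorem3:
  fixes M :: "'w measure"
    and S G :: "'w \<Rightarrow> 'e::countable"
    and R :: "'w \<Rightarrow> nat"
    and Ps :: "nat \<Rightarrow> 'w \<Rightarrow> 'e"
    and N :: nat
    and r :: "nat \<Rightarrow> real"
  assumes "prob_space M"
    and "S \<in> measurable M (count_space UNIV)"
    and "G \<in> measurable M (count_space UNIV)"
    and "R \<in> measurable M (count_space UNIV)"
    and "\<And>j. j \<in> {1..N} \<Longrightarrow> Ps j \<in> measurable M (count_space UNIV)"
    and "N \<ge> 1"
    and abs_cont: "\<And>e. measure M {w \<in> space M. S w = e} > 0 \<Longrightarrow> measure M {w \<in> space M. G w = e} > 0"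
    and R_range: "\<And>w. w \<in> space M \<Longrightarrow> R w \<le> N"
    and joint: "\<And>i (e :: nat \<Rightarrow> 'e). i \<le> N \<Longrightarrow>
        measure M {w \<in> space M. R w = i \<and> (\<forall>j\<in>{1..N}. Ps j w = e j)}
        = measure M {w \<in> space M. R w = i} *
          (\<Prod>j\<in>{1..N}. (if j = i then measure M {w \<in> space M. S w = e j}
                                    else measure M {w \<in> space M. G w = e j}))"
    and piD_pos: "0 < (\<Sum>i\<in>{1..N}. measure M {w \<in> space M. R w = i})"
    and piD_lt1: "(\<Sum>i\<in>{1..N}. measure M {w \<in> space M. R w = i}) < 1"
    and r_pos: "cprob M {w \<in> space M. \<forall>j\<in>{1..N}. LR M S G (Ps j w) = r j}
                        {w \<in> space M. R w = 0} > 0"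
  shows "(\<forall>D' \<subseteq> {1..N}.
            cprob M {w \<in> space M. R w \<in> D'} {w \<in> space M. \<forall>j\<in>{1..N}. LR M S G (Ps j w) = r j}
            = (\<Sum>i\<in>D'. r i * measure M {w \<in> space M. R w = i}) /
              (measure M {w \<in> space M. R w = 0} +
               (\<Sum>k\<in>{1..N}. r k * measure M {w \<in> space M. R w = k})))
       \<and> cprob M {w \<in> space M. \<forall>j\<in>{1..N}. LR M S G (Ps j w) = r j} {w \<in> space M. R w \<in> {1..N}}
         / cprob M {w \<in> space M. \<forall>j\<in>{1..N}. LR M S G (Ps j w) = r j} {w \<in> space M. R w = 0}
         = (\<Sum>i\<in>{1..N}. r i * measure M {w \<in> space M. R w = i}) /
           (\<Sum>i\<in>{1..N}. measure M {w \<in> space M. R w = i})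
       \<and> ((\<forall>i\<in>{1..N}. measure M {w \<in> space M. R w = i}
                = (\<Sum>k\<in>{1..N}. measure M {w \<in> space M. R w = k}) / real N) \<longrightarrow>
          cprob M {w \<in> space M. \<forall>j\<in>{1..N}. LR M S G (Ps j w) = r j} {w \<in> space M. R w \<in> {1..N}}
          / cprob M {w \<in> space M. \<forall>j\<in>{1..N}. LR M S G (Ps j w) = r j} {w \<in> space M. R w = 0}
          = (1 / real N) * (\<Sum>i\<in>{1..N}. r i))"
proof -
  interpret prob_space M by fact
  note P = assms(1) and Sm = assms(2) and Gm = assms(3) and Rm = assms(4) and Pm = assms(5)
  define L where "L = (\<lambda>k. {x. LR M S G x = r k})"
  define A where "A = {w \<in> space M. \<forall>j\<in>{1..N}. LR M S G (Ps j w) = r j}"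
  define g where "g = (\<Prod>j\<in>{1..N}. measure M {w\<in>space M. G w \<in> L j})"
  define pi where "pi = (\<lambda>i. measure M {w \<in> space M. R w = i})"
  have LR0: "LR M S G x \<ge> 0" for x unfolding LR_def by auto
  have Rs: "{w\<in>space M. R w \<in> D} \<in> sets M" for D
    using measurable_sets[OF Rm, of D] by (simp add: vimage_def Int_def conj_commute)
  have Rs1: "{w\<in>space M. R w = i} \<in> sets M" for i using Rs[of "{i}"] by simp
  have As: "A \<in> sets M"
  proof -
    have "{w\<in>space M. LR M S G (Ps j w) = r j} \<in> sets M" if "j \<in> {1..N}" for j
    proof -
      have "{w\<in>space M. LR M S G (Ps j w) = r j} = Ps j -` L j \<inter> space M" by (auto simp: L_def)
      then show ?thesis using measurable_sets[OF Pm[OF that], of "L j"] by simp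
    qed
    then show ?thesis unfolding A_def by (intro sets.sets_Collect_finite_All) auto
  qed
  have pt: "measure M {w\<in>space M. S w = x} = r k * measure M {w\<in>space M. G w = x}" if "x \<in> L k" for x k
  proof (cases "measure M {w\<in>space M. G w = x} > 0")
    case True
    then show ?thesis using that by (auto simp: L_def LR_def field_simps)
  next
    case False
    then have G0: "measure M {w\<in>space M. G w = x} = 0" using measure_nonneg[of M "{w\<in>space M. G w = x}"] by linarith
    then have "measure M {w\<in>space M. S w = x} = 0" using abs_cont[of x] measure_nonneg[of M "{w\<in>space M. S w = x}"] by linarith
    then show ?thesis using G0 by simp
  qed
  have SG: "measure M {w\<in>space M. S w \<in> L k} = r k * measure M {w\<in>space M. G w \<in> L k}" for k
  proof (cases "r k \<ge> 0")
    case False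
    then have "L k = {}" using LR0 unfolding L_def by (metis (mono_tags, lifting) empty_Collect_eq)
    then show ?thesis by simp
  next
    case True
    have "measure M (\<Union>x\<in>L k. {w\<in>space M. S w = x}) = r k * measure M (\<Union>x\<in>L k. {w\<in>space M. G w = x})"
    proof (rule scale_union[OF P])
      show "{w\<in>space M. S w = x} \<in> sets M" for x
        using measurable_sets[OF Sm, of "{x}"] by (simp add: vimage_def Int_def conj_commute)
      show "{w\<in>space M. G w = x} \<in> sets M" for x
        using measurable_sets[OF Gm, of "{x}"] by (simp add: vimage_def Int_def conj_commute)
    qed (auto simp: disjoint_family_on_def True pt)
    moreover have "(\<Union>x\<in>L k. {w\<in>space M. S w = x}) = {w\<in>space M. S w \<in> L k}" by auto
    moreover have "(\<Union>x\<in>L k. {w\<in>space M. G w = x}) = {w\<in>space M. G w \<in> L k}" by auto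
    ultimately show ?thesis by simp
  qed
  have PA: "measure M ({w\<in>space M. R w = i} \<inter> A) = pi i * (if i \<in> {1..N} then r i else 1) * g" if iN: "i \<le> N" for i
  proof -
    have "measure M {w\<in>space M. R w = i \<and> (\<forall>j\<in>{1..N}. if j\<in>{1..N} then Ps j w \<in> L j else Ps j w = undefined j)}
      = measure M {w\<in>space M. R w = i} *
      (\<Prod>j\<in>{1..N}. if j\<in>{1..N} then (if j=i then measure M {w\<in>space M. S w \<in> L j} else measure M {w\<in>space M. G w \<in> L j})
                     else (if j = i then measure M {w\<in>space M. S w = undefined j} else measure M {w\<in>space M. G w = undefined j}))"
      by (rule joint_sets[OF P Sm Gm Rm Pm assms(9) iN]) auto
    moreover have "{w\<in>space M. R w = i \<and> (\<forall>j\<in>{1..N}. if j\<in>{1..N} then Ps j w \<in> L j else Ps j w = undefined j)}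
       = {w\<in>space M. R w = i} \<inter> A" by (auto simp: A_def L_def)
    moreover have "(\<Prod>j\<in>{1..N}. if j\<in>{1..N} then (if j=i then measure M {w\<in>space M. S w \<in> L j} else measure M {w\<in>space M. G w \<in> L j})
                     else (if j = i then measure M {w\<in>space M. S w = undefined j} else measure M {w\<in>space M. G w = undefined j}))
       = (\<Prod>j\<in>{1..N}. (if j = i then r j else 1) * measure M {w\<in>space M. G w \<in> L j})"
      by (rule prod.cong) (auto simp: SG)
    moreover have "\<dots> = (if i \<in> {1..N} then r i else 1) * g"
      by (simp add: prod.distrib g_def)
    ultimately show ?thesis by (simp add: pi_def mult_ac)
  qed
  have Usum: "measure M ({w\<in>space M. R w \<in> D} \<inter> X) = (\<Sum>i\<in>D. measure M ({w\<in>space M. R w = i} \<inter> X))"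
    if "finite D" "X \<in> sets M" for D X
  proof -
    have "{w\<in>space M. R w \<in> D} \<inter> X = (\<Union>i\<in>D. {w\<in>space M. R w = i} \<inter> X)" by auto
    moreover have "measure M (\<Union>i\<in>D. {w\<in>space M. R w = i} \<inter> X) = (\<Sum>i\<in>D. measure M ({w\<in>space M. R w = i} \<inter> X))"
      by (rule measure_UNION') (use that Rs1 in \<open>auto simp: fmeasurable_eq_sets pairwise_def disjnt_def\<close>)
    ultimately show ?thesis by simp
  qed
  have N01: "{0..N} = insert 0 {1..N}" by auto
  have Aall: "measure M A = pi 0 * g + (\<Sum>k\<in>{1..N}. r k * pi k) * g"
  proof -
    have "A = {w\<in>space M. R w \<in> {0..N}} \<inter> A" using R_range by (auto simp: A_def)
    then have "measure M A = (\<Sum>i\<in>{0..N}. measure M ({w\<in>space M. R w = i} \<inter> A))"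
      using Usum[OF _ As, of "{0..N}"] by simp
    also have "\<dots> = (\<Sum>i\<in>{0..N}. pi i * (if i \<in> {1..N} then r i else 1) * g)"
      by (rule sum.cong) (auto simp: PA)
    also have "\<dots> = pi 0 * g + (\<Sum>k\<in>{1..N}. r k * pi k) * g"
      unfolding N01 by (simp add: sum_distrib_right sum_distrib_left mult_ac)
    finally show ?thesis .
  qed
  have AD: "measure M ({w\<in>space M. R w \<in> D} \<inter> A) = (\<Sum>i\<in>D. r i * pi i) * g" if "D \<subseteq> {1..N}" for D
  proof -
    have fD: "finite D" using that finite_subset by blast
    have "measure M ({w\<in>space M. R w \<in> D} \<inter> A) = (\<Sum>i\<in>D. measure M ({w\<in>space M. R w = i} \<inter> A))"
      using Usum[OF fD As] .
    also have "\<dots> = (\<Sum>i\<in>D. r i * pi i * g)"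
      by (rule sum.cong) (use that in \<open>auto simp: PA\<close>)
    finally show ?thesis by (simp add: sum_distrib_right)
  qed
  have piD: "measure M {w\<in>space M. R w \<in> {1..N}} = (\<Sum>i\<in>{1..N}. pi i)"
  proof -
    have "\<And>D. {w\<in>space M. R w \<in> D} \<inter> space M = {w\<in>space M. R w \<in> D}" by auto
    moreover have "\<And>i. {w\<in>space M. R w = i} \<inter> space M = {w\<in>space M. R w = i}" by auto
    ultimately show ?thesis using Usum[of "{1..N}" "space M"] by (simp only: pi_def) simp
  qed
  have A0: "measure M (A \<inter> {w\<in>space M. R w = 0}) = pi 0 * g"
    using PA[of 0] by (simp add: Int_commute)
  have c0: "cprob M A {w\<in>space M. R w = 0} = g" and g0: "g \<noteq> 0"
  proof -
    have "cprob M A {w\<in>space M. R w = 0} = pi 0 * g / pi 0"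
      unfolding cprob_def A0 by (simp add: pi_def)
    moreover have "pi 0 \<noteq> 0 \<and> g \<noteq> 0" using r_pos calculation unfolding A_def[symmetric] by auto
    ultimately show "cprob M A {w\<in>space M. R w = 0} = g" "g \<noteq> 0" by auto
  qed
  have c1: "cprob M A {w\<in>space M. R w \<in> {1..N}} = (\<Sum>i\<in>{1..N}. r i * pi i) * g / (\<Sum>i\<in>{1..N}. pi i)"
    unfolding cprob_def piD using AD[of "{1..N}"] by (simp add: Int_commute)
  have ratio: "cprob M A {w\<in>space M. R w \<in> {1..N}} / cprob M A {w\<in>space M. R w = 0}
      = (\<Sum>i\<in>{1..N}. r i * pi i) / (\<Sum>i\<in>{1..N}. pi i)"
    unfolding c0 c1 using g0 by simp
  show ?thesis
  proof (intro conjI allI impI)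
    fix D' assume D': "D' \<subseteq> {1..N}"
    have "cprob M {w \<in> space M. R w \<in> D'} A = (\<Sum>i\<in>D'. r i * pi i) / (pi 0 + (\<Sum>k\<in>{1..N}. r k * pi k))"
      unfolding cprob_def AD[OF D'] Aall using g0 by (simp add: distrib_right[symmetric])
    then show "cprob M {w \<in> space M. R w \<in> D'} {w \<in> space M. \<forall>j\<in>{1..N}. LR M S G (Ps j w) = r j}
            = (\<Sum>i\<in>D'. r i * measure M {w \<in> space M. R w = i}) /
              (measure M {w \<in> space M. R w = 0} +
               (\<Sum>k\<in>{1..N}. r k * measure M {w \<in> space M. R w = k}))"
      unfolding A_def pi_def .
  next
    show "cprob M {w \<in> space M. \<forall>j\<in>{1..N}. LR M S G (Ps j w) = r j} {w \<in> space M. R w \<in> {1..N}}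
         / cprob M {w \<in> space M. \<forall>j\<in>{1..N}. LR M S G (Ps j w) = r j} {w \<in> space M. R w = 0}
         = (\<Sum>i\<in>{1..N}. r i * measure M {w \<in> space M. R w = i}) /
           (\<Sum>i\<in>{1..N}. measure M {w \<in> space M. R w = i})"
      using ratio unfolding A_def pi_def .
  next
    assume eq: "\<forall>i\<in>{1..N}. measure M {w \<in> space M. R w = i}
                = (\<Sum>k\<in>{1..N}. measure M {w \<in> space M. R w = k}) / real N"
    define s where "s = (\<Sum>i\<in>{1..N}. pi i)"
    have s0: "s > 0" using piD_pos unfolding s_def pi_def .
    have "(\<Sum>i\<in>{1..N}. r i * pi i) = (\<Sum>i\<in>{1..N}. r i * (s / real N))"
    proof (rule sum.cong)
      fix i assume "i \<in> {1..N}"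
      then have "pi i = s / real N" using eq unfolding s_def pi_def by blast
      then show "r i * pi i = r i * (s / real N)" by simp
    qed simp
    also have "\<dots> = (\<Sum>i\<in>{1..N}. r i) * s / real N" by (simp add: sum_distrib_right sum_divide_distrib)
    finally have se: "(\<Sum>i\<in>{1..N}. r i * pi i) = (\<Sum>i\<in>{1..N}. r i) * s / real N" .
    have N0: "real N \<noteq> 0" using assms(6) by simp
    have "cprob M A {w\<in>space M. R w \<in> {1..N}} / cprob M A {w\<in>space M. R w = 0} = ((\<Sum>i\<in>{1..N}. r i) * s / real N) / s"
      unfolding ratio se s_def ..
    also have "\<dots> = (1 / real N) * (\<Sum>i\<in>{1..N}. r i)"
      using s0 N0 by (simp add: divide_simps)
    finally have "cprob M A {w\<in>space M. R w \<in> {1..N}} / cprob M A {w\<in>space M. R w = 0} = (1 / real N) * (\<Sum>i\<in>{1..N}. r i)" .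
    then show "cprob M {w \<in> space M. \<forall>j\<in>{1..N}. LR M S G (Ps j w) = r j} {w \<in> space M. R w \<in> {1..N}}
          / cprob M {w \<in> space M. \<forall>j\<in>{1..N}. LR M S G (Ps j w) = r j} {w \<in> space M. R w = 0}
          = (1 / real N) * (\<Sum>i\<in>{1..N}. r i)" unfolding A_def .
  qed
qed

end
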